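(* Let $2\le j\le n$ and let $K_j\subset\wedge^j\mathbb{R}^n$ be a proper cone. Then $\widehat{T}(K_j)$, if it is not $\{0\}$, coincides with the union of all $j$-dimensional linear subspaces $L\subset\mathbb{R}^n$ for which the line $\mathcal{A}_j(L)$ is contained in $K_j\cup(-K_j)$. The set $T(K_j)$, if it is nonempty, coincides with the closure of the union of all $j$-dimensional linear subspaces $L\subset\mathbb{R}^n$ for which the nonzero elements of the line $\mathcal{A}_j(L)$ lie in $\operatorname{int}(K_j)\cup\operatorname{int}(-K_j)$.
   Context: A proper cone is a closed convex cone that is pointed and solid. $\wedge^j\mathbb{R}^n$ is the $j$th exterior power of $\mathbb{R}^n$. For a $j$-dimensional subspace $L\subset\mathbb{R}^n$, $\mathcal{A}_j(L)=\{t(x_1\wedge\cdots\wedge x_j):t\in\mathbb{R}\}$ for any basis $x_1,\ldots,x_j$ of $L$ (well defined). $\widehat{T}(K_j)$ is the set of all $x_1\in\mathbb{R}^n$ for which there exist $x_2,\ldots,x_j\in\mathbb{R}^n$ with $x_1\wedge\cdots\wedge x_j\in(K_j\cup(-K_j))\setminus\{0\}$, together with $0$. $T(K_j)$ is the closure of the set of all $x_1\in\mathbb{R}^n$ for which there exist $x_2,\ldots,x_j\in\mathbb{R}^n$ with $x_1\wedge\cdots\wedge x_j\in\operatorname{int}(K_j)\cup\operatorname{int}(-K_j)$. *)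

theory Defs
  imports "HOL-Analysis.Analysis" "HOL-Combinatorics.Permutations"
begin

text \<open>Concrete model of the j-th exterior power of R^n, where R^n = real^'n and the
  index type 'n is linearly ordered (n = CARD('n)).  An element of the exterior power
  is a vector indexed by subsets I of the index type whose coordinates vanish unless
  card I = j; the coordinate at I is the coefficient of the standard basis
  j-vector e_I (elements of I taken in increasing order).\<close>

definition ext_space :: "nat \<Rightarrow> (real ^ (('n::{finite,wellorder}) set)) set" where
  "ext_space j = {v. \<forall>I. card I \<noteq> j \<longrightarrow> v $ I = 0}"

definition nth_elem :: "'n::{finite,wellorder} set \<Rightarrow> nat \<Rightarrow> 'n" where
  "nth_elem I i = sorted_list_of_set I ! i"

text \<open>x 0 \<wedge> ... \<wedge> x (j-1): its I-coordinate is the minor det[x_k(i_l)] (Leibniz formula).\<close>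
definition wedge :: "nat \<Rightarrow> (nat \<Rightarrow> real ^ ('n::{finite,wellorder})) \<Rightarrow> real ^ ('n set)" where
  "wedge j x = (\<chi> I. if card I = j then
      (\<Sum>p | p permutes {..<j}. of_int (sign p) * (\<Prod>k<j. x k $ nth_elem I (p k)))
    else 0)"

definition ext_int :: "nat \<Rightarrow> (real ^ (('n::{finite,wellorder}) set)) set \<Rightarrow> (real ^ ('n set)) set" where
  "ext_int j K = (top_of_set (ext_space j)) interior_of K"

definition proper_cone :: "nat \<Rightarrow> (real ^ (('n::{finite,wellorder}) set)) set \<Rightarrow> bool" where
  "proper_cone j K \<longleftrightarrow> K \<subseteq> ext_space j \<and> closed K \<and> convex K \<and> cone K
     \<and> K \<inter> uminus ` K = {0} \<and> ext_int j K \<noteq> {}"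

definition is_basis_of :: "nat \<Rightarrow> (nat \<Rightarrow> real ^ ('n::{finite,wellorder})) \<Rightarrow> (real ^ ('n::{finite,wellorder})) set \<Rightarrow> bool" where
  "is_basis_of j x L \<longleftrightarrow> inj_on x {..<j} \<and> independent (x ` {..<j}) \<and> span (x ` {..<j}) = L"

text \<open>The line A_j(L) = { t (x_1 \<wedge> ... \<wedge> x_j) : t real } (independent of the basis).\<close>
definition Aline :: "nat \<Rightarrow> (real ^ ('n::{finite,wellorder})) set \<Rightarrow> (real ^ ('n set)) set" where
  "Aline j L = {t *\<^sub>R wedge j x | t x. is_basis_of j x L}"

definition That :: "nat \<Rightarrow> (real ^ (('n::{finite,wellorder}) set)) set \<Rightarrow> (real ^ ('n::{finite,wellorder})) set" where
  "That j K = {y. \<exists>x. x 0 = y \<and> wedge j x \<in> (K \<union> uminus ` K) - {0}} \<union> {0}"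

definition Tset :: "nat \<Rightarrow> (real ^ (('n::{finite,wellorder}) set)) set \<Rightarrow> (real ^ ('n::{finite,wellorder})) set" where
  "Tset j K = closure {y. \<exists>x. x 0 = y \<and> wedge j x \<in> ext_int j K \<union> ext_int j (uminus ` K)}"

end

theory Submission
  imports Defs Jordan_Normal_Form.Determinant
begin


definition minor :: "nat \<Rightarrow> (nat \<Rightarrow> real ^ ('n::{finite,wellorder})) \<Rightarrow> 'n set \<Rightarrow> real mat" where
  "minor j x I = Matrix.mat j j (\<lambda>(k,i). vec_nth (x k) (nth_elem I i))"

lemma minor_carrier[simp]: "minor j x I \<in> carrier_mat j j"
  by (simp add: minor_def)

lemma wedge_minor: "card I = j \<Longrightarrow> vec_nth (wedge j x) I = Determinant.det (minor j x I)"
proof -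
  assume "card I = j"
  have e: "{..<j} = {0..<j}" by auto
  have *: "(\<Prod>k = 0..<j. vec_nth (x k) (nth_elem I (p k))) = (\<Prod>i = 0..<j. Matrix.mat j j (\<lambda>(k,i). vec_nth (x k) (nth_elem I i)) $$ (i, p i))"
    if "p permutes {0..<j}" for p
    using that by (auto simp: permutes_in_image intro!: prod.cong)
  show ?thesis using \<open>card I = j\<close>
    unfolding wedge_def Determinant.det_def minor_def e
    by (simp only: vec_lambda_beta dim_row_mat dim_col_mat simp_thms if_True) (intro sum.cong refl arg_cong2[where f="(*)"] *, simp)
qed

lemma wedge_nth_other: "card I \<noteq> j \<Longrightarrow> vec_nth (wedge j x) I = 0"
  by (simp add: wedge_def)

lemma minor_change:
  assumes "\<And>k. k < j \<Longrightarrow> y k = (\<Sum>m<j. A k m *\<^sub>R x m)"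
  shows "minor j y I = Matrix.mat j j (\<lambda>(k,m). A k m) * minor j x I"
proof (rule eq_matI)
  fix k i assume k: "k < dim_row (Matrix.mat j j (\<lambda>(k,m). A k m) * minor j x I)"
     and i: "i < dim_col (Matrix.mat j j (\<lambda>(k,m). A k m) * minor j x I)"
  then have kj: "k < j" and ij: "i < j" by (auto simp: minor_def)
  show "minor j y I $$ (k, i) = (Matrix.mat j j (\<lambda>(k,m). A k m) * minor j x I) $$ (k, i)"
    using kj ij assms[OF kj]
    by (simp add: minor_def scalar_prod_def lessThan_atLeast0 sum_component)
qed (auto simp: minor_def)

lemma wedge_change:
  assumes "\<And>k. k < j \<Longrightarrow> y k = (\<Sum>m<j. A k m *\<^sub>R x m)"
  shows "wedge j y = Determinant.det (Matrix.mat j j (\<lambda>(k,m). A k m)) *\<^sub>R wedge j x"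
proof -
  have "vec_nth (wedge j y) I = vec_nth (Determinant.det (Matrix.mat j j (\<lambda>(k,m). A k m)) *\<^sub>R wedge j x) I" for I
  proof (cases "card I = j")
    case True
    then show ?thesis
      by (simp add: wedge_minor minor_change[OF assms] det_mult[of _ j])
  next
    case False
    then show ?thesis by (simp add: wedge_nth_other)
  qed
  then show ?thesis by (subst Finite_Cartesian_Product.vec_eq_iff) simp
qed

lemma wedge_zero_if_rel:
  assumes "k0 < j" "c k0 \<noteq> 0" "(\<Sum>k<j. c k *\<^sub>R x k) = 0"
  shows "wedge j x = 0"
proof -
  have "vec_nth (wedge j x) I = 0" for I
  proof (cases "card I = j")
    case True
    let ?M = "minor j x I"
    let ?v = "Matrix.vec j c"
    have v1: "?v \<in> carrier_vec j" by simp
    have v2: "?v \<noteq> 0\<^sub>v j" using assms by (metis index_vec index_zero_vec(1))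
    have v3: "transpose_mat ?M *\<^sub>v ?v = 0\<^sub>v j"
    proof (rule eq_vecI)
      fix i assume "i < dim_vec (0\<^sub>v j :: real Matrix.vec)"
      then have i: "i < j" by simp
      have "(transpose_mat ?M *\<^sub>v ?v) $ i = (\<Sum>k<j. c k * vec_nth (x k) (nth_elem I i))"
        using i by (simp add: minor_def scalar_prod_def lessThan_atLeast0 mult.commute)
      also have "\<dots> = vec_nth (\<Sum>k<j. c k *\<^sub>R x k) (nth_elem I i)" by (simp add: sum_component)
      also have "\<dots> = 0" using assms(3) by simp
      finally show "(transpose_mat ?M *\<^sub>v ?v) $ i = 0\<^sub>v j $ i" using i by simp
    qed (auto simp: minor_def)
    have "\<exists>v. v \<in> carrier_vec j \<and> v \<noteq> 0\<^sub>v j \<and> transpose_mat ?M *\<^sub>v v = 0\<^sub>v j"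
      using v1 v2 v3 by blast
    then have "Determinant.det (transpose_mat ?M) = 0"
      using det_0_iff_vec_prod_zero[of "transpose_mat ?M" j] by (simp add: minor_def)
    then show ?thesis using True by (simp add: wedge_minor det_transpose[of _ j])
  next
    case False
    then show ?thesis by (simp add: wedge_nth_other)
  qed
  then show ?thesis by (simp add: Finite_Cartesian_Product.vec_eq_iff)
qed


lemma wedge_nonzero_imp_basis:
  assumes "wedge j x \<noteq> 0"
  shows "inj_on x {..<j} \<and> independent (x ` {..<j})"
proof (rule ccontr)
  assume H: "\<not> (inj_on x {..<j} \<and> independent (x ` {..<j}))"
  show False
  proof (cases "inj_on x {..<j}")
    case False
    then obtain a b where ab: "a < j" "b < j" "a \<noteq> b" "x a = x b"
      unfolding inj_on_def by auto
    let ?c = "\<lambda>k. (if k = a then 1 else 0) - (if k = b then 1 else (0::real))"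
    have pt: "?c k *\<^sub>R x k = (if k = a then x k else 0) - (if k = b then x k else 0)" for k
      using ab by auto
    have "(\<Sum>k<j. ?c k *\<^sub>R x k) = (\<Sum>k<j. (if k = a then x k else 0)) - (\<Sum>k<j. (if k = b then x k else 0))"
      unfolding pt by (rule sum_subtractf)
    also have "\<dots> = 0" using ab by simp
    finally have "wedge j x = 0" using ab by (intro wedge_zero_if_rel[of a j ?c]) auto
    then show False using assms by simp
  next
    case True
    then have dep: "dependent (x ` {..<j})" using H by simp
    then obtain u where u: "\<exists>v\<in>x ` {..<j}. u v \<noteq> 0" "(\<Sum>v\<in>x ` {..<j}. u v *\<^sub>R v) = 0"
      using dependent_finite[of "x ` {..<j}"] by auto
    then obtain k0 where k0: "k0 < j" "u (x k0) \<noteq> 0" by auto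
    have "(\<Sum>k<j. u (x k) *\<^sub>R x k) = 0"
      using u(2) by (simp add: sum.reindex[OF True])
    then have "wedge j x = 0" using k0 by (intro wedge_zero_if_rel[of k0 j "u \<circ> x"]) auto
    then show False using assms by simp
  qed
qed

lemma indep_span_disjoint:
  fixes B :: "(real ^ 'n) set"
  assumes "independent B" "S \<subseteq> B" "v \<in> span S" "v \<in> span (B - S)"
  shows "v = 0"
proof -
  have fB: "finite B" using assms(1) by (simp add: finiteI_independent)
  then have fS: "finite S" and fE: "finite (B - S)" using assms(2) finite_subset by auto
  obtain a where a: "v = (\<Sum>w\<in>S. a w *\<^sub>R w)" using assms(3) span_finite[OF fS] by auto
  obtain b where b: "v = (\<Sum>w\<in>B - S. b w *\<^sub>R w)" using assms(4) span_finite[OF fE] by auto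
  define c where "c w = (if w \<in> S then a w else - b w)" for w
  have BU: "B = S \<union> (B - S)" using assms(2) by auto
  have "(\<Sum>w\<in>B. c w *\<^sub>R w) = (\<Sum>w\<in>S. c w *\<^sub>R w) + (\<Sum>w\<in>B - S. c w *\<^sub>R w)"
    by (subst BU, rule sum.union_disjoint) (use fS fE in auto)
  also have "(\<Sum>w\<in>S. c w *\<^sub>R w) = v" unfolding a c_def by simp
  also have "(\<Sum>w\<in>B - S. c w *\<^sub>R w) = - v" unfolding b c_def by (simp add: sum_negf)
  finally have "(\<Sum>w\<in>B. c w *\<^sub>R w) = 0" by simp
  then have "\<forall>w\<in>B. c w = 0" using assms(1) independent_explicit by blast
  then have "\<forall>w\<in>B - S. b w = 0" unfolding c_def by auto
  then show ?thesis unfolding b by simp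
qed


lemma Basis_cart_real: "(Basis :: (real ^ 'n) set) = range (\<lambda>i. axis i 1)"
  by (auto simp: Basis_vec_def)

lemma exists_good_I:
  fixes S :: "(real ^ ('n::{finite,wellorder})) set"
  assumes "independent S"
  obtains I where "card I = card S" "\<And>v. v \<in> span S \<Longrightarrow> (\<forall>i\<in>I. vec_nth v i = 0) \<Longrightarrow> v = 0"
proof -
  obtain B where B: "S \<subseteq> B" "B \<subseteq> S \<union> Basis" "independent B" "S \<union> Basis \<subseteq> span B"
    using maximal_independent_subset_extend[of S "S \<union> Basis"] assms by auto
  have "span (Basis :: (real ^ ('n::{finite,wellorder})) set) \<subseteq> span B"
    using B(4) by (intro span_minimal) (auto simp: subspace_span)
  then have spB: "span B = UNIV" by (simp add: span_Basis top_le)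
  have fB: "finite B" using B(3) by (simp add: finiteI_independent)
  have dU: "dim (UNIV :: (real ^ ('n::{finite,wellorder})) set) = card (UNIV :: 'n set)" by simp
  have cB: "card B = card (UNIV :: 'n set)"
    using dim_eq_card_independent[OF B(3)] dim_span[of B] spB dU by simp
  define E where "E = B - S"
  define J where "J = {i. axis i (1::real) \<in> E}"
  have EJ: "E = (\<lambda>i. axis i (1::real)) ` J"
    using B(2) unfolding E_def J_def Basis_cart_real by auto
  have "inj_on (\<lambda>i. axis i (1::real)) J" by (auto simp: inj_on_def axis_eq_axis)
  then have cJ: "card J = card E" using EJ card_image by metis
  have fS: "finite S" using fB B(1) finite_subset by auto
  have cE: "card E = card B - card S" unfolding E_def using card_Diff_subset[OF fS B(1)] by simp
  have SB: "card S \<le> card B" using card_mono[OF fB B(1)] .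
  define I where "I = - J"
  have "card I = card (UNIV :: 'n set) - card J" unfolding I_def Compl_eq_Diff_UNIV by (rule card_Diff_subset) auto
  then have cI: "card I = card S" using cJ cE cB SB by simp
  show ?thesis
  proof (rule that[OF cI])
    fix v :: "real ^ ('n::{finite,wellorder})" assume v: "v \<in> span S" "\<forall>i\<in>I. vec_nth v i = 0"
    have ve: "v = (\<Sum>i\<in>J. vec_nth v i *\<^sub>R axis i 1)"
    proof (subst Finite_Cartesian_Product.vec_eq_iff, intro allI)
      fix k
      have "vec_nth (\<Sum>i\<in>J. vec_nth v i *\<^sub>R axis i (1::real)) k = (if k \<in> J then vec_nth v k else 0)"
        by (simp add: sum_component axis_def if_distrib[of "\<lambda>z. vec_nth v _ * z"] sum.delta cong: if_cong)
      also have "\<dots> = vec_nth v k" using v(2) unfolding I_def by auto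
      finally show "vec_nth v k = vec_nth (\<Sum>i\<in>J. vec_nth v i *\<^sub>R axis i (1::real)) k" by simp
    qed
    have "v \<in> span E"
      by (subst ve, intro span_sum span_scale span_base) (auto simp: J_def)
    then show "v = 0" using indep_span_disjoint[OF B(3) B(1) v(1)] unfolding E_def by simp
  qed
qed


lemma nth_elem_surj:
  fixes I :: "('n::{finite,wellorder}) set"
  assumes "i \<in> I"
  obtains m where "m < card I" "nth_elem I m = i"
proof -
  have "i \<in> set (sorted_list_of_set I)" using assms by simp
  then obtain m where "m < length (sorted_list_of_set I)" "sorted_list_of_set I ! m = i"
    by (metis in_set_conv_nth)
  then show ?thesis using that by (simp add: nth_elem_def)
qed



lemma indep_imp_wedge_nonzero:
  assumes inj: "inj_on x {..<j}" and ind: "independent (x ` {..<j})"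
  shows "wedge j x \<noteq> 0"
proof
  assume w0: "wedge j x = 0"
  obtain I where cI: "card I = card (x ` {..<j})"
    and key: "\<And>v. v \<in> span (x ` {..<j}) \<Longrightarrow> (\<forall>i\<in>I. vec_nth v i = 0) \<Longrightarrow> v = 0"
    using exists_good_I[OF ind] by blast
  have cIj: "card I = j" using card_image[OF inj] cI by simp
  let ?M = "minor j x I"
  have "Determinant.det ?M = 0" using w0 wedge_minor[OF cIj, of x] by simp
  then have "Determinant.det (transpose_mat ?M) = 0" by (simp add: det_transpose[of _ j])
  moreover have Mc: "transpose_mat ?M \<in> carrier_mat j j" by simp
  ultimately obtain c where c: "c \<in> carrier_vec j" "c \<noteq> 0\<^sub>v j" "transpose_mat ?M *\<^sub>v c = 0\<^sub>v j"
    using det_0_iff_vec_prod_zero[OF Mc] by blast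
  have dc: "dim_vec c = j" using c(1) by auto
  define v where "v = (\<Sum>k<j. vec_index c k *\<^sub>R x k)"
  have vspan: "v \<in> span (x ` {..<j})"
    unfolding v_def by (intro span_sum span_scale span_base) auto
  have "\<forall>i\<in>I. vec_nth v i = 0"
  proof
    fix i assume "i \<in> I"
    obtain m where m0: "m < card I" "nth_elem I m = i" using nth_elem_surj[OF \<open>i \<in> I\<close>] by blast
    then have m: "m < j" "nth_elem I m = i" using cIj by auto
    have "vec_nth v i = (\<Sum>k<j. vec_index c k * vec_nth (x k) (nth_elem I m))"
      unfolding v_def m(2)[symmetric] by (simp add: sum_component)
    also have "\<dots> = vec_index (transpose_mat ?M *\<^sub>v c) m"
      using m(1) dc by (simp add: minor_def scalar_prod_def lessThan_atLeast0 mult.commute)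
    also have "\<dots> = 0" using c(3) m(1) by simp
    finally show "vec_nth v i = 0" .
  qed
  then have v0: "v = 0" using key vspan by blast
  define u where "u w = vec_index c (inv_into {..<j} x w)" for w
  have "(\<Sum>w\<in>x ` {..<j}. u w *\<^sub>R w) = (\<Sum>k<j. u (x k) *\<^sub>R x k)"
    by (rule sum.reindex[OF inj, unfolded comp_def])
  also have "\<dots> = v" unfolding v_def u_def using inj by (intro sum.cong) auto
  finally have "(\<Sum>w\<in>x ` {..<j}. u w *\<^sub>R w) = 0" using v0 by simp
  moreover have indx: "\<forall>c. (\<Sum>v\<in>x ` {..<j}. c v *\<^sub>R v) = 0 \<longrightarrow> (\<forall>v\<in>x ` {..<j}. c v = 0)"
    using ind unfolding independent_explicit by (rule conjunct2)
  ultimately have "\<forall>w\<in>x ` {..<j}. u w = 0" by blast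
  then have "\<forall>k<j. vec_index c k = 0" unfolding u_def using inj by auto
  then have "c = 0\<^sub>v j" using dc by (intro eq_vecI) auto
  then show False using c(2) by simp
qed



lemma ext_space_subspace: "subspace (ext_space j :: (real ^ (('n::{finite,wellorder}) set)) set)"
  unfolding subspace_def ext_space_def by auto

lemma ext_int_scale:
  fixes K :: "(real ^ (('n::{finite,wellorder}) set)) set"
  assumes c: "c \<noteq> 0" and w: "w \<in> ext_int j K"
  shows "c *\<^sub>R w \<in> ext_int j ((\<lambda>v. c *\<^sub>R v) ` K)"
proof -
  let ?E = "ext_space j :: (real ^ ('n set)) set"
  obtain T where T: "openin (top_of_set ?E) T" "w \<in> T" "T \<subseteq> K"
    using w unfolding ext_int_def interior_of_def by auto
  obtain U where U: "open U" "T = ?E \<inter> U" using T(1) openin_open by metis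
  let ?T2 = "?E \<inter> (\<lambda>v. c *\<^sub>R v) ` U"
  have "openin (top_of_set ?E) ?T2" using open_scaling[OF c U(1)] openin_open by blast
  moreover have "c *\<^sub>R w \<in> ?T2"
    using T(2) U(2) subspace_scale[OF ext_space_subspace[of j]] by auto
  moreover have "?T2 \<subseteq> (\<lambda>v. c *\<^sub>R v) ` K"
  proof
    fix y assume y: "y \<in> ?T2"
    then obtain u where u: "u \<in> U" "y = c *\<^sub>R u" by auto
    have "u = inverse c *\<^sub>R y" using u(2) c by simp
    moreover have "inverse c *\<^sub>R y \<in> ?E" using y by (intro subspace_scale[OF ext_space_subspace]) auto
    ultimately have "u \<in> ?E" by simp
    then have "u \<in> K" using u(1) U(2) T(3) by auto
    then show "y \<in> (\<lambda>v. c *\<^sub>R v) ` K" using u(2) by auto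
  qed
  ultimately show ?thesis unfolding ext_int_def interior_of_def by blast
qed

lemma ext_int_mono: "A \<subseteq> B \<Longrightarrow> ext_int j A \<subseteq> ext_int j B"
  unfolding ext_int_def by (rule interior_of_mono)

lemma ext_int_sub: "ext_int j K \<subseteq> K"
  unfolding ext_int_def by (rule interior_of_subset)

lemma scale_K_pos: "cone K \<Longrightarrow> c > 0 \<Longrightarrow> (\<lambda>v. c *\<^sub>R v) ` K \<subseteq> K"
  unfolding cone_def by auto

lemma scale_K_neg: "cone K \<Longrightarrow> c < 0 \<Longrightarrow> (\<lambda>v. c *\<^sub>R v) ` K \<subseteq> uminus ` K"
proof
  fix y assume "cone K" "c < 0" "y \<in> (\<lambda>v. c *\<^sub>R v) ` K"
  then obtain k where k: "k \<in> K" "y = c *\<^sub>R k" by auto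
  have cK: "\<forall>x\<in>K. \<forall>d\<ge>0. d *\<^sub>R x \<in> K" using \<open>cone K\<close> unfolding cone_def .
  have "0 \<le> - c" using \<open>c < 0\<close> by simp
  then have "(- c) *\<^sub>R k \<in> K" using cK k(1) by blast
  moreover have "y = - ((- c) *\<^sub>R k)" using k(2) by simp
  ultimately show "y \<in> uminus ` K" by blast
qed

lemma scale_mK_pos: "cone K \<Longrightarrow> c > 0 \<Longrightarrow> (\<lambda>v. c *\<^sub>R v) ` uminus ` K \<subseteq> uminus ` K"
proof
  fix y assume "cone K" "c > 0" "y \<in> (\<lambda>v. c *\<^sub>R v) ` uminus ` K"
  then obtain k where k: "k \<in> K" "y = c *\<^sub>R (- k)" by auto
  have "c *\<^sub>R k \<in> K" using \<open>cone K\<close> \<open>c > 0\<close> k(1) unfolding cone_def by auto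
  moreover have "y = - (c *\<^sub>R k)" using k(2) by simp
  ultimately show "y \<in> uminus ` K" by blast
qed

lemma scale_mK_neg: "cone K \<Longrightarrow> c < 0 \<Longrightarrow> (\<lambda>v. c *\<^sub>R v) ` uminus ` K \<subseteq> K"
proof
  fix y assume "cone K" "c < 0" "y \<in> (\<lambda>v. c *\<^sub>R v) ` uminus ` K"
  then obtain k where k: "k \<in> K" "y = c *\<^sub>R (- k)" by auto
  have cK: "\<forall>x\<in>K. \<forall>d\<ge>0. d *\<^sub>R x \<in> K" using \<open>cone K\<close> unfolding cone_def .
  have "0 \<le> - c" using \<open>c < 0\<close> by simp
  then have "(- c) *\<^sub>R k \<in> K" using cK k(1) by blast
  moreover have "y = (- c) *\<^sub>R k" using k(2) by simp
  ultimately show "y \<in> K" by blast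
qed

lemma ints_scale:
  fixes K :: "(real ^ (('n::{finite,wellorder}) set)) set"
  assumes "cone K" "c \<noteq> 0" "w \<in> ext_int j K \<union> ext_int j (uminus ` K)"
  shows "c *\<^sub>R w \<in> ext_int j K \<union> ext_int j (uminus ` K)"
proof (cases "c > 0")
  case True
  show ?thesis using assms(3)
  proof
    assume "w \<in> ext_int j K"
    then show ?thesis using ext_int_scale[OF assms(2)] ext_int_mono[OF scale_K_pos[OF assms(1) True]] by blast
  next
    assume "w \<in> ext_int j (uminus ` K)"
    then show ?thesis using ext_int_scale[OF assms(2)] ext_int_mono[OF scale_mK_pos[OF assms(1) True]] by blast
  qed
next
  case False
  then have neg: "c < 0" using assms(2) by simp
  show ?thesis using assms(3)
  proof
    assume "w \<in> ext_int j K"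
    then show ?thesis using ext_int_scale[OF assms(2)] ext_int_mono[OF scale_K_neg[OF assms(1) neg]] by blast
  next
    assume "w \<in> ext_int j (uminus ` K)"
    then show ?thesis using ext_int_scale[OF assms(2)] ext_int_mono[OF scale_mK_neg[OF assms(1) neg]] by blast
  qed
qed

lemma KmK_scale:
  assumes "cone K" "w \<in> K \<union> uminus ` K"
  shows "c *\<^sub>R w \<in> K \<union> uminus ` K"
proof (cases "c = 0")
  case True
  have "w \<in> K \<or> -w \<in> K" using assms(2) by auto
  then have "0 \<in> K" using assms(1) unfolding cone_def by (metis order_refl scaleR_zero_left)
  then show ?thesis using True by simp
next
  case False
  show ?thesis
  proof (cases "c > 0")
    case True
    then show ?thesis using assms scale_K_pos[OF assms(1) True] scale_mK_pos[OF assms(1) True] by blast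
  next
    case F: False
    then have neg: "c < 0" using False by simp
    then show ?thesis using assms scale_K_neg[OF assms(1) neg] scale_mK_neg[OF assms(1) neg] by blast
  qed
qed

lemma zero_not_ext_int:
  fixes K :: "(real ^ (('n::{finite,wellorder}) set)) set"
  assumes pc: "proper_cone j K" and jn: "j \<le> CARD('n)"
  shows "0 \<notin> ext_int j K"
proof
  assume "0 \<in> ext_int j K"
  then obtain T where T: "openin (top_of_set (ext_space j)) T" "0 \<in> T" "T \<subseteq> K"
    unfolding ext_int_def interior_of_def by auto
  obtain U where U: "open U" "T = ext_space j \<inter> U" using T(1) openin_open by metis
  obtain e where e: "e > 0" "ball 0 e \<subseteq> U" using U T(2) open_contains_ball by blast
  obtain I :: "'n set" where I: "card I = j"
    using obtain_subset_with_card_n[of j "UNIV :: 'n set"] jn by auto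
  define v :: "real ^ ('n set)" where "v = (\<chi> J. if J = I then 1 else 0)"
  have vE: "v \<in> ext_space j" unfolding v_def ext_space_def using I by auto
  have vI: "vec_nth v I = 1" by (simp add: v_def)
  have v0: "v \<noteq> 0" using vI by auto
  define t where "t = e / (2 * norm v)"
  have t: "t > 0" using e v0 by (simp add: t_def)
  have nt: "norm (t *\<^sub>R v) < e" using e v0 by (simp add: t_def)
  have tv: "t *\<^sub>R v \<in> ball 0 e" using nt by (simp add: dist_norm)
  have tv': "(- t) *\<^sub>R v \<in> ball 0 e" using nt by (simp add: dist_norm)
  have "t *\<^sub>R v \<in> ext_space j" by (rule subspace_scale[OF ext_space_subspace vE])
  then have "t *\<^sub>R v \<in> K" using U(2) e(2) tv T(3) by blast
  moreover have "(- t) *\<^sub>R v \<in> ext_space j" by (rule subspace_scale[OF ext_space_subspace vE])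
  then have "(- t) *\<^sub>R v \<in> K" using U(2) e(2) tv' T(3) by blast
  ultimately have "t *\<^sub>R v \<in> K \<inter> uminus ` K"
    by (metis IntI image_eqI minus_minus scaleR_minus_left)
  then have "t *\<^sub>R v = 0" using pc unfolding proper_cone_def by auto
  then show False using t v0 by simp
qed



lemma span_coords:
  fixes j :: nat
  assumes inj: "inj_on x {..<j}" and y: "y \<in> span (x ` {..<j})"
  shows "\<exists>a. y = (\<Sum>m<j. a m *\<^sub>R x m)"
proof -
  have fin: "finite (x ` {..<j})" by (rule finite_imageI) simp
  obtain u where u: "y = (\<Sum>w\<in>x ` {..<j}. u w *\<^sub>R w)"
    using y span_finite[OF fin] by auto
  also have "\<dots> = (\<Sum>m<j. u (x m) *\<^sub>R x m)"
    by (rule sum.reindex[OF inj, unfolded comp_def])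
  finally show ?thesis by (intro exI[of _ "\<lambda>m. u (x m)"])
qed

lemma basis_props:
  assumes inj: "inj_on x {..<j}" and ind: "independent (x ` {..<j})"
  shows "is_basis_of j x (span (x ` {..<j})) \<and> subspace (span (x ` {..<j})) \<and> dim (span (x ` {..<j})) = j"
proof -
  have "dim (span (x ` {..<j})) = card (x ` {..<j})"
    by (simp add: dim_span dim_eq_card_independent[OF ind])
  also have "\<dots> = j" using card_image[OF inj] by simp
  finally show ?thesis using inj ind by (simp add: is_basis_of_def subspace_span)
qed

lemma Aline_basis:
  assumes b: "is_basis_of j x L"
  shows "Aline j L \<subseteq> range (\<lambda>t. t *\<^sub>R wedge j x)"
proof
  fix z assume "z \<in> Aline j L"
  then obtain t y where z: "z = t *\<^sub>R wedge j y" and hb: "is_basis_of j y L"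
    unfolding Aline_def by auto
  have "\<forall>k\<in>{..<j}. \<exists>a. y k = (\<Sum>m<j. a m *\<^sub>R x m)"
  proof
    fix k assume "k \<in> {..<j}"
    then have "y k \<in> L" using hb unfolding is_basis_of_def by (auto intro: span_base)
    then have "y k \<in> span (x ` {..<j})" using b unfolding is_basis_of_def by simp
    then show "\<exists>a. y k = (\<Sum>m<j. a m *\<^sub>R x m)"
      using span_coords b unfolding is_basis_of_def by blast
  qed
  then obtain A where A: "\<forall>k\<in>{..<j}. y k = (\<Sum>m<j. A k m *\<^sub>R x m)"
    by (rule bchoice[elim_format]) blast
  have "wedge j y = Determinant.det (Matrix.mat j j (\<lambda>(k,m). A k m)) *\<^sub>R wedge j x"
    by (rule wedge_change) (use A in auto)
  then have "z = (t * Determinant.det (Matrix.mat j j (\<lambda>(k,m). A k m))) *\<^sub>R wedge j x"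
    using z by simp
  then show "z \<in> range (\<lambda>t. t *\<^sub>R wedge j x)" by blast
qed

lemma wedge_in_Aline: "is_basis_of j x L \<Longrightarrow> wedge j x \<in> Aline j L"
  unfolding Aline_def by (rule CollectI, rule exI[of _ 1], rule exI[of _ x]) simp

lemma extend_basis:
  fixes L :: "(real ^ ('n::{finite,wellorder})) set"
  assumes L: "subspace L" "dim L = j" and y: "y \<in> L" "y \<noteq> 0"
  shows "\<exists>x. x 0 = y \<and> is_basis_of j x L"
proof -
  have "independent {y}" using y(2) by simp
  then obtain B where B: "{y} \<subseteq> B" "B \<subseteq> L" "independent B" "L \<subseteq> span B"
    using maximal_independent_subset_extend[of "{y}" L] y(1) by auto
  have spB: "span B = L" using B(2,4) L(1) span_minimal by blast
  have fB: "finite B" using B(3) by (simp add: finiteI_independent)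
  have cB: "card B = j" using dim_eq_card_independent[OF B(3)] dim_span[of B] spB L(2) by simp
  have yB: "y \<in> B" using B(1) by simp
  then have j1: "j \<ge> 1" using cB fB card_0_eq by fastforce
  obtain f where f: "bij_betw f {0..<card (B - {y})} (B - {y})"
    using ex_bij_betw_nat_finite[of "B - {y}"] fB by auto
  have cBy: "card (B - {y}) = j - 1" using cB yB fB by simp
  define x where "x k = (if k = 0 then y else f (k - 1))" for k
  have img: "x ` {..<j} = B"
  proof
    show "x ` {..<j} \<subseteq> B"
    proof
      fix z assume "z \<in> x ` {..<j}"
      then obtain k where k: "k < j" "z = x k" by auto
      show "z \<in> B"
      proof (cases "k = 0")
        case True then show ?thesis using k yB by (simp add: x_def)
      next
        case False
        then have "k - 1 \<in> {0..<card (B - {y})}" using k cBy by auto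
        then have "f (k - 1) \<in> B - {y}" using f unfolding bij_betw_def by auto
        then show ?thesis using k False by (simp add: x_def)
      qed
    qed
  next
    show "B \<subseteq> x ` {..<j}"
    proof
      fix z assume zB: "z \<in> B"
      show "z \<in> x ` {..<j}"
      proof (cases "z = y")
        case True then show ?thesis using j1 by (auto simp: x_def intro!: image_eqI[of _ _ 0])
      next
        case False
        then have "z \<in> f ` {0..<card (B - {y})}" using zB f unfolding bij_betw_def by auto
        then obtain m where m: "m < j - 1" "z = f m" using cBy by auto
        then have "x (Suc m) = z" by (simp add: x_def)
        moreover have "Suc m < j" using m by simp
        ultimately show ?thesis by blast
      qed
    qed
  qed
  have inj: "inj_on x {..<j}"
    using img cB by (simp add: inj_on_iff_eq_card)
  have "is_basis_of j x L" unfolding is_basis_of_def using inj img B(3) spB by simp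
  moreover have "x 0 = y" by (simp add: x_def)
  ultimately show ?thesis by blast
qed



theorem lemma3:
  fixes K :: "(real ^ (('n::{finite,wellorder}) set)) set" and j :: nat
  assumes "2 \<le> j" and "j \<le> CARD('n)" and "proper_cone j K"
  shows "(That j K \<noteq> {0} \<longrightarrow>
            That j K = \<Union>{L. subspace L \<and> dim L = j \<and> Aline j L \<subseteq> K \<union> uminus ` K})
       \<and> (Tset j K \<noteq> {} \<longrightarrow>
            Tset j K = closure (\<Union>{L. subspace L \<and> dim L = j \<and>
               Aline j L - {0} \<subseteq> ext_int j K \<union> ext_int j (uminus ` K)}))"
proof -
  have cone: "cone K" using assms(3) unfolding proper_cone_def by auto
  have j0: "0 < j" using assms(1) by simp
  let ?G1 = "{L. subspace L \<and> dim L = j \<and> Aline j L \<subseteq> K \<union> uminus ` K}"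
  let ?G2 = "{L. subspace L \<and> dim L = j \<and>
               Aline j L - {0} \<subseteq> ext_int j K \<union> ext_int j (uminus ` K)}"
  have claim1: "\<exists>L\<in>?G1. x 0 \<in> L" if w: "wedge j x \<in> (K \<union> uminus ` K) - {0}" for x
  proof -
    have b: "inj_on x {..<j} \<and> independent (x ` {..<j})"
      using w wedge_nonzero_imp_basis by blast
    let ?L = "span (x ` {..<j})"
    have bp: "is_basis_of j x ?L \<and> subspace ?L \<and> dim ?L = j" using basis_props b by blast
    have "Aline j ?L \<subseteq> K \<union> uminus ` K"
    proof
      fix z assume "z \<in> Aline j ?L"
      then have "z \<in> range (\<lambda>t. t *\<^sub>R wedge j x)" using Aline_basis[OF conjunct1[OF bp]] by (rule rev_subsetD)
      then obtain t where t: "z = t *\<^sub>R wedge j x" by auto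
      have "wedge j x \<in> K \<union> uminus ` K" using w by simp
      then show "z \<in> K \<union> uminus ` K" unfolding t by (rule KmK_scale[OF cone])
    qed
    moreover have "x 0 \<in> ?L" using j0 by (intro span_base) auto
    ultimately show ?thesis using bp by (intro bexI[of _ ?L]) auto
  qed
  have part1: "That j K = \<Union>?G1" if ne: "That j K \<noteq> {0}"
  proof
    show "That j K \<subseteq> \<Union>?G1"
    proof
      fix y assume y: "y \<in> That j K"
      show "y \<in> \<Union>?G1"
      proof (cases "y = 0")
        case True
        have "0 \<in> That j K" unfolding That_def by simp
        then obtain y0 where y0: "y0 \<in> That j K" "y0 \<noteq> 0" using ne by blast
        then obtain x where "x 0 = y0" "wedge j x \<in> (K \<union> uminus ` K) - {0}"
          unfolding That_def by blast
        then obtain L where "L \<in> ?G1" using claim1 by blast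
        then have "0 \<in> L" by (simp add: subspace_0)
        then show ?thesis using True \<open>L \<in> ?G1\<close> by blast
      next
        case False
        then obtain x where "x 0 = y" "wedge j x \<in> (K \<union> uminus ` K) - {0}"
          using y unfolding That_def by blast
        then show ?thesis using claim1 by blast
      qed
    qed
  next
    show "\<Union>?G1 \<subseteq> That j K"
    proof
      fix y assume "y \<in> \<Union>?G1"
      then obtain L where L: "L \<in> ?G1" "y \<in> L" by blast
      show "y \<in> That j K"
      proof (cases "y = 0")
        case True then show ?thesis unfolding That_def by simp
      next
        case False
        then obtain x where x: "x 0 = y" "is_basis_of j x L"
          using extend_basis[of L j y] L by auto
        have "wedge j x \<noteq> 0"
          using x(2) unfolding is_basis_of_def by (intro indep_imp_wedge_nonzero) auto
        moreover have "Aline j L \<subseteq> K \<union> uminus ` K" using L(1) by simp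
        then have "wedge j x \<in> K \<union> uminus ` K"
          using wedge_in_Aline[OF x(2)] by (rule subsetD)
        ultimately show ?thesis using x(1) unfolding That_def by auto
      qed
    qed
  qed
  let ?Q = "{y. \<exists>x. x 0 = y \<and> wedge j x \<in> ext_int j K \<union> ext_int j (uminus ` K)}"
  have z1: "0 \<notin> ext_int j K" using zero_not_ext_int[OF assms(3) assms(2)] .
  have z2: "0 \<notin> ext_int j (uminus ` K)"
  proof
    assume "0 \<in> ext_int j (uminus ` K)"
    then have "(-1::real) *\<^sub>R 0 \<in> ext_int j ((\<lambda>v. (-1::real) *\<^sub>R v) ` uminus ` K)"
      by (intro ext_int_scale) auto
    moreover have "(\<lambda>v. (-1::real) *\<^sub>R v) ` uminus ` K = K" by (simp add: image_image)
    ultimately show False using z1 by simp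
  qed
  have Q_sub: "?Q \<subseteq> \<Union>?G2"
  proof
    fix y assume "y \<in> ?Q"
    then obtain x where x: "x 0 = y" "wedge j x \<in> ext_int j K \<union> ext_int j (uminus ` K)" by blast
    then have "wedge j x \<noteq> 0" using z1 z2 by auto
    then have b: "inj_on x {..<j} \<and> independent (x ` {..<j})"
      using wedge_nonzero_imp_basis by blast
    let ?L = "span (x ` {..<j})"
    have bp: "is_basis_of j x ?L \<and> subspace ?L \<and> dim ?L = j" using basis_props b by blast
    have "Aline j ?L - {0} \<subseteq> ext_int j K \<union> ext_int j (uminus ` K)"
    proof
      fix z assume z: "z \<in> Aline j ?L - {0}"
      then have "z \<in> Aline j ?L" by simp
      then have "z \<in> range (\<lambda>t. t *\<^sub>R wedge j x)" using Aline_basis[OF conjunct1[OF bp]] by (rule rev_subsetD)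
      then obtain t where t: "z = t *\<^sub>R wedge j x" by auto
      then have "t \<noteq> 0" using z by auto
      then show "z \<in> ext_int j K \<union> ext_int j (uminus ` K)" unfolding t by (rule ints_scale[OF cone _ x(2)])
    qed
    then have G: "?L \<in> ?G2" using bp by simp
    have "x 0 \<in> ?L" using j0 by (intro span_base) auto
    then have "y \<in> ?L" using x(1) by simp
    with G show "y \<in> \<Union>?G2" by (rule UnionI)
  qed
  have nz_in_Q: "y \<in> ?Q" if L: "L \<in> ?G2" "y \<in> L" "y \<noteq> 0" for L y
  proof -
    obtain x where x: "x 0 = y" "is_basis_of j x L"
      using extend_basis[of L j y] L by auto
    have "wedge j x \<noteq> 0"
      using x(2) unfolding is_basis_of_def by (intro indep_imp_wedge_nonzero) auto
    moreover have "wedge j x \<in> Aline j L" using wedge_in_Aline[OF x(2)] .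
    ultimately have "wedge j x \<in> Aline j L - {0}" by simp
    moreover have "Aline j L - {0} \<subseteq> ext_int j K \<union> ext_int j (uminus ` K)" using L(1) by simp
    ultimately have "wedge j x \<in> ext_int j K \<union> ext_int j (uminus ` K)" by (rule rev_subsetD)
    then show ?thesis using x(1) by auto
  qed
  have G2_sub: "\<Union>?G2 \<subseteq> closure ?Q"
  proof
    fix y assume "y \<in> \<Union>?G2"
    then obtain L where L: "L \<in> ?G2" "y \<in> L" by (rule UnionE)
    show "y \<in> closure ?Q"
    proof (cases "y = 0")
      case False
      show ?thesis by (rule subsetD[OF closure_subset nz_in_Q[OF L False]])
    next
      case True
      have LG: "subspace L \<and> dim L = j" using L(1) by simp
      have "\<not> L \<subseteq> {0}" using LG j0 dim_eq_0[of L] by auto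
      then obtain z where z: "z \<in> L" "z \<noteq> 0" by blast
      have nz: "norm z > 0" using z(2) by simp
      have approx: "\<exists>q\<in>?Q. dist q y < e" if e: "e > 0" for e
      proof -
        define q where "q = (e / (2 * norm z)) *\<^sub>R z"
        have qL: "q \<in> L" unfolding q_def using LG z(1) by (simp add: subspace_scale)
        have cpos: "e / (2 * norm z) > 0" using e nz by simp
        have q0: "q \<noteq> 0" unfolding q_def using cpos z(2) e by simp
        have qQ: "q \<in> ?Q" by (rule nz_in_Q[OF L(1) qL q0])
        have "dist q y = norm q" using True by (simp add: dist_norm)
        also have "\<dots> = (e / (2 * norm z)) * norm z" unfolding q_def using cpos e by simp
        also have "\<dots> = e / 2" using nz by (simp add: field_simps)
        finally have "dist q y < e" using e by simp
        with qQ show ?thesis by (rule bexI[rotated])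
      qed
      show ?thesis unfolding closure_approachable by (intro allI impI approx)
    qed
  qed
  have part2: "Tset j K = closure (\<Union>?G2)"
  proof
    show "Tset j K \<subseteq> closure (\<Union>?G2)" unfolding Tset_def by (rule closure_mono[OF Q_sub])
    show "closure (\<Union>?G2) \<subseteq> Tset j K" unfolding Tset_def
      by (rule closure_minimal[OF G2_sub closed_closure])
  qed
  show ?thesis
  proof (intro conjI impI)
    assume "That j K \<noteq> {0}"
    then show "That j K = \<Union>?G1" by (rule part1)
  next
    show "Tset j K = closure (\<Union>?G2)" by (rule part2)
  qed
qed

end
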